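(* Let $E$, $v$ and $f_T$ be as described in the context. Then, for $s\in(0,\frac{\alpha}{2})$, \begin{equation*} a_{ij}(x)\partial_{ij}(\Delta_e^sv(x))\geq F_s(x),\ \ \ \ \forall x\in\mathbb{R}^n,\ e\in E\setminus\{0\}, \end{equation*} where $a_{ij}(x)=cof_{ij}(D^2v(x))$ (the algebraic cofactor of the $(i,j)$ entry of $D^2v(x)$) and \begin{equation*} F_s(x):=n\left(\det(D^2v(x))^{\frac{n-1}{n}}\right)\left(\frac{f_T^{\frac{1}{n}}(x+e)+f_T^{\frac{1}{n}}(x-e)-2f_T^{\frac{1}{n}}(x)}{|e|^{2s}}\right). \end{equation*}
   Context: Setting: $\alpha\in(0,1)$; $f_p$ is a positive periodic function on $\mathbb{R}^n$ with $d_0^{-1}\leq f_p\leq d_0$, $[f_p]_{C^\alpha(\mathbb{R}^n)}\leq d_0$, and (after normalization) $f_p(x+e_i)=f_p(x)$ for the standard basis vectors $e_i$. $u$ is a convex solution of $\det(D^2u)=f$ in $\mathbb{R}^n$ (with $f$ a $C^\alpha$ perturbation of $f_p$ decaying at infinity), which after modification on a compact set is assumed $C^{2,\alpha}_{loc}(\mathbb{R}^n)$ with $f\in C^\alpha(\mathbb{R}^n)$. $T$ is a linear transform with $\det T=1$ such that $|u(Tx)-\frac12|x|^2|\leq c_0|x|^{2-\theta}$ for $|x|\geq1$. Set $v=u\circ T$, $f_T(x)=f(T(x))$, $(f_p)_T(x)=f_p(T(x))$, so that $\det(D^2v)=f_T$ in $\mathbb{R}^n$ and $v\in C^2$ with $c_1I\leq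 D^2v\leq c_2I$ for positive constants $c_1,c_2$. Let $p_i:=T^{-1}e_i$, so $(f_p)_T(x+p_i)=(f_p)_T(x)$, and $E:=\{k_1p_1+\cdots+k_np_n:\ k_1,\dots,k_n\in\mathbb{Z}\}$. For $e\in\mathbb{R}^n\setminus\{0\}$ and $s\in(0,1)$, the $2s$-order increment is $\Delta_e^sv(x):=\frac{v(x+e)+v(x-e)-2v(x)}{|e|^{2s}}$. Summation over repeated indices $i,j$ is implied. *)

theory Defs
  imports "HOL-Analysis.Analysis"
begin

definition partial :: "'n::finite \<Rightarrow> (real^'n \<Rightarrow> real) \<Rightarrow> real^'n \<Rightarrow> real" where
  "partial i g x = deriv (\<lambda>t. g (x + t *\<^sub>R axis i 1)) 0"

definition hess :: "(real^'n::finite \<Rightarrow> real) \<Rightarrow> real^'n \<Rightarrow> real^'n^'n" where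
  "hess g x = (\<chi> i j. partial i (partial j g) x)"

definition C2 :: "(real^'n::finite \<Rightarrow> real) \<Rightarrow> bool" where
  "C2 g \<longleftrightarrow> (\<exists>Dg H. (\<forall>x. (g has_derivative (\<lambda>h. Dg x \<bullet> h)) (at x)) \<and>
                     (\<forall>x. (Dg has_derivative (\<lambda>h. H x *v h)) (at x)) \<and>
                     continuous_on UNIV H)"

text \<open>Algebraic cofactor of the (i,j) entry: (-1)^(i+j) times the (i,j) minor, which equals the
  determinant of A with its i-th row replaced by the j-th standard basis vector.\<close>
definition cofactor :: "real^'n^'n \<Rightarrow> 'n::finite \<Rightarrow> 'n \<Rightarrow> real" where
  "cofactor A i j = det (\<chi> k. if k = i then axis j 1 else A $ k)"

definition incr :: "real \<Rightarrow> real^'n::finite \<Rightarrow> (real^'n \<Rightarrow> real) \<Rightarrow> real^'n \<Rightarrow> real" where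
  "incr s e v x = (v (x + e) + v (x - e) - 2 * v x) / (norm e powr (2 * s))"

end

theory Submission
  imports Defs
begin

lemma mv_sum: "(A::real^'n^'m) *v sum f S = sum (\<lambda>i. A *v f i) S"
  by (induction S rule: infinite_finite_induct) (auto simp: matrix_vector_right_distrib)

lemma bil_sym:
  fixes C :: "real^'n^'n"
  assumes "transpose C = C"
  shows "x \<bullet> (C *v y) = y \<bullet> (C *v x)"
proof -
  have "x \<bullet> (C *v y) = (x v* C) \<bullet> y" by (simp add: dot_lmul_matrix)
  also have "x v* C = transpose C *v x" by simp
  finally show ?thesis using assms by (simp add: inner_commute)
qed

lemma axis_quad: "axis i 1 \<bullet> ((C::real^'n^'n) *v axis j 1) = C$i$j"
  by (simp add: matrix_vector_mult_basis inner_axis' column_def)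

lemma gs_step:
  fixes C :: "real^'n^'n"
  assumes sym: "transpose C = C" and pd: "\<And>x. x \<noteq> 0 \<Longrightarrow> 0 < x \<bullet> (C *v x)"
    and fin: "finite S"
  shows "\<exists>q::'n \<Rightarrow> real^'n. (\<forall>i. i \<notin> S \<longrightarrow> q i = axis i 1) \<and>
     (\<forall>i\<in>S. \<forall>j\<in>S. i \<noteq> j \<longrightarrow> q i \<bullet> (C *v q j) = 0) \<and>
     (\<forall>i. q i \<bullet> (C *v q i) \<le> C$i$i) \<and> det (\<chi> i. q i) = 1"
  using fin
proof (induction S rule: finite_induct)
  case empty
  have "(\<chi> i. axis i 1) = (mat 1 :: real^'n^'n)"
    by (simp add: vec_eq_iff axis_def mat_def)
  then show ?case
    by (intro exI[of _ "\<lambda>i. axis i 1"]) (simp add: axis_quad)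
next
  case (insert a S)
  then obtain q where q1: "\<forall>i. i \<notin> S \<longrightarrow> q i = axis i 1"
    and q2: "\<forall>i\<in>S. \<forall>j\<in>S. i \<noteq> j \<longrightarrow> q i \<bullet> (C *v q j) = 0"
    and q3: "\<forall>i. q i \<bullet> (C *v q i) \<le> C$i$i" and q4: "det (\<chi> i. q i) = 1" by blast
  define Q where "Q = (\<chi> i. q i)"
  have qnz: "q j \<noteq> 0" for j
  proof
    assume "q j = 0"
    then have "row j Q = 0" by (simp add: Q_def row_def vec_eq_iff)
    then have "det Q = 0" by (rule det_zero_row)
    with q4 show False by (simp add: Q_def)
  qed
  define d where "d j = q j \<bullet> (C *v q j)" for j
  have dpos: "0 < d j" for j using pd qnz by (simp add: d_def)
  define c where "c j = axis a 1 \<bullet> (C *v q j) / d j" for j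
  define p where "p = (\<Sum>j\<in>S. c j *\<^sub>R q j)"
  define q' where "q' = q(a := axis a 1 - p)"
  have qa: "q a = axis a 1" using q1 insert by auto
  have orth: "q' a \<bullet> (C *v q k) = 0" if "k \<in> S" for k
  proof -
    have "p \<bullet> (C *v q k) = (\<Sum>j\<in>S. c j * (q j \<bullet> (C *v q k)))"
      by (simp add: p_def inner_sum_left)
    also have "\<dots> = c k * (q k \<bullet> (C *v q k))"
      using that q2 insert(1) by (subst sum.remove[of S k]) (auto intro!: sum.neutral)
    also have "\<dots> = axis a 1 \<bullet> (C *v q k)" using dpos[of k] by (simp add: c_def d_def)
    finally show ?thesis by (simp add: q'_def inner_diff_left)
  qed
  have orth2: "q k \<bullet> (C *v q' a) = 0" if "k \<in> S" for k
    using orth[OF that] bil_sym[OF sym] by metis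
  have "q' a \<bullet> (C *v p) = (\<Sum>j\<in>S. c j * (q' a \<bullet> (C *v q j)))"
    by (simp add: p_def mv_sum inner_sum_right matrix_vector_mult_scaleR)
  also have "\<dots> = 0" using orth by simp
  finally have qp: "q' a \<bullet> (C *v p) = 0" .
  have "q' a \<bullet> (C *v q' a) = q' a \<bullet> (C *v axis a 1)"
    using qp by (simp add: q'_def matrix_vector_mult_diff_distrib inner_diff_right)
  also have "\<dots> = axis a 1 \<bullet> (C *v axis a 1) - p \<bullet> (C *v axis a 1)"
    by (simp add: q'_def inner_diff_left)
  also have "p \<bullet> (C *v axis a 1) = (\<Sum>j\<in>S. c j * (q j \<bullet> (C *v axis a 1)))"
    by (simp add: p_def inner_sum_left)
  also have "\<dots> = (\<Sum>j\<in>S. c j * c j * d j)"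
    using dpos by (intro sum.cong) (auto simp: c_def bil_sym[OF sym, of "q _"])
  also have "axis a 1 \<bullet> (C *v axis a 1) = C$a$a"
    by (rule axis_quad)
  finally have qaa: "q' a \<bullet> (C *v q' a) \<le> C$a$a"
    using dpos by (smt (verit) mult_nonneg_nonneg sum_nonneg less_imp_le zero_le_square)
  have pspan: "- p \<in> vec.span {row j Q |j. j \<noteq> a}"
  proof -
    have "p \<in> vec.span {row j Q |j. j \<noteq> a}"
      unfolding p_def scalar_mult_eq_scaleR[symmetric]
    proof (intro vec.span_sum vec.span_scale vec.span_base)
      fix j assume "j \<in> S"
      then show "q j \<in> {row j Q |j. j \<noteq> a}" using insert(2)
        by (auto simp: Q_def row_def intro!: exI[of _ j])
    qed
    then show ?thesis by (rule vec.span_neg)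
  qed
  have "det (\<chi> k. if k = a then row a Q + - p else row k Q) = det Q"
    by (rule det_row_span[OF pspan])
  moreover have "(\<chi> k. if k = a then row a Q + - p else row k Q) = (\<chi> i. q' i)"
    by (simp add: vec_eq_iff Q_def row_def q'_def qa)
  ultimately have detq': "det (\<chi> i. q' i) = 1" using q4 by (simp add: Q_def)
  show ?case
  proof (intro exI[of _ q'] conjI)
    show "\<forall>i. i \<notin> insert a S \<longrightarrow> q' i = axis i 1" using q1 by (simp add: q'_def)
    show "\<forall>i\<in>insert a S. \<forall>j\<in>insert a S. i \<noteq> j \<longrightarrow> q' i \<bullet> (C *v q' j) = 0"
      using q2 orth orth2 insert(2) by (auto simp: q'_def)
    show "\<forall>i. q' i \<bullet> (C *v q' i) \<le> C $ i $ i" using q3 qaa by (auto simp: q'_def)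
  qed (fact detq')
qed

lemma mat_quad: "((X::real^'n^'n) ** C ** transpose X) $ i $ j = X$i \<bullet> (C *v X$j)"
proof -
  have "((X::real^'n^'n) ** C ** transpose X) $ i $ j = (\<Sum>l\<in>UNIV. (\<Sum>k\<in>UNIV. X$i$k * C$k$l) * X$j$l)"
    by (simp add: matrix_matrix_mult_def transpose_def)
  also have "\<dots> = (\<Sum>k\<in>UNIV. X$i$k * (\<Sum>l\<in>UNIV. C$k$l * X$j$l))"
    unfolding sum_distrib_left sum_distrib_right by (subst sum.swap) (simp add: mult.assoc)
  also have "\<dots> = X$i \<bullet> (C *v X$j)"
    by (simp add: matrix_vector_mult_def inner_vec_def)
  finally show ?thesis .
qed

lemma gs_full:
  fixes C :: "real^'n^'n"
  assumes sym: "transpose C = C" and pd: "\<And>x. x \<noteq> 0 \<Longrightarrow> 0 < x \<bullet> (C *v x)"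
  shows "\<exists>Q::real^'n^'n. det Q = 1 \<and> (\<forall>i j. i \<noteq> j \<longrightarrow> Q$i \<bullet> (C *v Q$j) = 0) \<and>
     (\<forall>i. 0 < Q$i \<bullet> (C *v Q$i) \<and> Q$i \<bullet> (C *v Q$i) \<le> C$i$i)"
proof -
  obtain q :: "'n \<Rightarrow> real^'n" where
     q2: "\<forall>i\<in>UNIV. \<forall>j\<in>UNIV. i \<noteq> j \<longrightarrow> q i \<bullet> (C *v q j) = 0"
    and q3: "\<forall>i. q i \<bullet> (C *v q i) \<le> C$i$i" and q4: "det (\<chi> i. q i) = 1"
    using gs_step[OF sym pd, of UNIV] by auto
  define Q where "Q = (\<chi> i. q i)"
  have qnz: "q j \<noteq> 0" for j
  proof
    assume "q j = 0"
    then have "row j Q = 0" by (simp add: Q_def row_def vec_eq_iff)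
    then have "det Q = 0" by (rule det_zero_row)
    with q4 show False by (simp add: Q_def)
  qed
  show ?thesis
    using q2 q3 q4 pd[OF qnz] by (intro exI[of _ Q]) (auto simp: Q_def)
qed

lemma det_pos_had:
  fixes C :: "real^'n^'n"
  assumes sym: "transpose C = C" and pd: "\<And>x. x \<noteq> 0 \<Longrightarrow> 0 < x \<bullet> (C *v x)"
  shows "0 < det C \<and> det C \<le> (\<Prod>i\<in>UNIV. C$i$i)"
proof -
  obtain Q :: "real^'n^'n" where q1: "det Q = 1" and q2: "\<forall>i j. i \<noteq> j \<longrightarrow> Q$i \<bullet> (C *v Q$j) = 0"
    and q3: "\<forall>i. 0 < Q$i \<bullet> (C *v Q$i) \<and> Q$i \<bullet> (C *v Q$i) \<le> C$i$i"
    using gs_full[OF sym pd] by blast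
  have "det (Q ** C ** transpose Q) = det C" using q1 by (simp add: det_mul)
  moreover have "det (Q ** C ** transpose Q) = (\<Prod>i\<in>UNIV. Q$i \<bullet> (C *v Q$i))"
    by (subst det_diagonal) (use q2 in \<open>auto simp: mat_quad\<close>)
  ultimately have e: "det C = (\<Prod>i\<in>UNIV. Q$i \<bullet> (C *v Q$i))" by simp
  show ?thesis unfolding e
    by (intro conjI prod_pos prod_mono) (use q3 in \<open>auto intro: less_imp_le\<close>)
qed

lemma sqinv: "0 < (d::real) \<Longrightarrow> 1/sqrt d * (1/sqrt d) * d = 1"
proof -
  assume d: "0 < d"
  have ss: "sqrt d * sqrt d = d" using d by simp
  have s: "sqrt d \<noteq> 0" using d by simp
  have "1/sqrt d * (1/sqrt d) * d = 1/sqrt d * (1/sqrt d) * (sqrt d * sqrt d)" using ss by simp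
  also have "\<dots> = 1" using s by (simp add: field_simps)
  finally show ?thesis .
qed

lemma normalize:
  fixes C :: "real^'n^'n"
  assumes sym: "transpose C = C" and pd: "\<And>x. x \<noteq> 0 \<Longrightarrow> 0 < x \<bullet> (C *v x)"
  shows "\<exists>R::real^'n^'n. R ** C ** transpose R = mat 1"
proof -
  obtain Q :: "real^'n^'n" where q1: "det Q = 1" and q2: "\<forall>i j. i \<noteq> j \<longrightarrow> Q$i \<bullet> (C *v Q$j) = 0"
    and q3': "\<forall>i. 0 < Q$i \<bullet> (C *v Q$i) \<and> Q$i \<bullet> (C *v Q$i) \<le> C$i$i"
    using gs_full[OF sym pd] by blast
  have q3: "\<forall>i. 0 < Q$i \<bullet> (C *v Q$i)" using q3' by blast
  define c where "c i = 1 / sqrt (Q$i \<bullet> (C *v Q$i))" for i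
  define R where "R = (\<chi> i. c i *\<^sub>R Q$i)"
  have ent: "(R ** C ** transpose R) $ i $ j = mat 1 $ i $ j" for i j
  proof -
    have "(R ** C ** transpose R) $ i $ j = R$i \<bullet> (C *v R$j)" by (rule mat_quad)
    also have "\<dots> = c i * c j * (Q$i \<bullet> (C *v Q$j))"
      unfolding R_def vec_lambda_beta matrix_vector_mult_scaleR inner_scaleR_left inner_scaleR_right
      by (simp only: mult.assoc mult.left_commute)
    also have "\<dots> = mat 1 $ i $ j"
    proof (cases "i = j")
      case True
      have "c i * c i * (Q$i \<bullet> (C *v Q$i)) = 1"
        using q3[rule_format, of i] unfolding c_def by (rule sqinv)
      then show ?thesis using True by (simp add: mat_def)
    next
      case False
      then show ?thesis using q2 by (simp add: mat_def)
    qed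
    finally show ?thesis .
  qed
  have "R ** C ** transpose R = mat 1" by (simp add: vec_eq_iff ent)
  then show ?thesis by blast
qed

lemma amgm:
  fixes x :: "'n::finite \<Rightarrow> real"
  assumes pos: "\<And>i. 0 < x i"
  shows "(\<Prod>i\<in>UNIV. x i) \<le> ((\<Sum>i\<in>UNIV. x i) / real CARD('n)) ^ CARD('n)"
proof -
  define N where "N = real CARD('n)"
  have N: "N > 0" by (simp add: N_def)
  define m where "m = (\<Sum>i\<in>UNIV. x i) / N"
  have m: "m > 0" unfolding m_def using N pos by (intro divide_pos_pos sum_pos) auto
  have "ln (\<Prod>i\<in>UNIV. x i / m) = (\<Sum>i\<in>UNIV. ln (x i / m))"
  proof (rule ln_prod)
    show "\<And>i. i \<in> UNIV \<Longrightarrow> x i / m \<noteq> 0" using pos m by (metis divide_pos_pos less_irrefl)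
  qed simp
  also have "\<dots> \<le> (\<Sum>i\<in>UNIV. x i / m - 1)"
    using pos m by (intro sum_mono ln_le_minus_one divide_pos_pos) auto
  also have "\<dots> = (\<Sum>i\<in>UNIV. x i) / m - N"
    by (simp add: sum_subtractf sum_divide_distrib N_def)
  also have "(\<Sum>i\<in>UNIV. x i) / m = N"
  proof -
    have sx: "(\<Sum>i\<in>UNIV. x i) > 0" using pos by (intro sum_pos) auto
    show ?thesis using sx N unfolding m_def by simp
  qed
  also have "N - N = 0" by simp
  finally have "(\<Prod>i\<in>UNIV. x i / m) \<le> 1"
    using pos m by (subst (asm) ln_le_zero_iff) (auto intro!: prod_pos)
  moreover have "(\<Prod>i\<in>UNIV. x i / m) = (\<Prod>i\<in>UNIV. x i) / m ^ CARD('n)"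
    by (simp add: prod_dividef)
  ultimately have "(\<Prod>i\<in>UNIV. x i) / m ^ CARD('n) \<le> 1" by simp
  moreover have "m ^ CARD('n) > 0" using m by simp
  ultimately have "(\<Prod>i\<in>UNIV. x i) \<le> m ^ CARD('n)" by (simp add: divide_le_eq_1_pos)
  then show ?thesis by (simp add: m_def N_def)
qed

lemma trace_ge:
  fixes C :: "real^'n^'n"
  assumes sym: "transpose C = C" and pd: "\<And>x. x \<noteq> 0 \<Longrightarrow> 0 < x \<bullet> (C *v x)"
  shows "real CARD('n) * det C powr (1 / real CARD('n)) \<le> trace C"
proof -
  define N where "N = real CARD('n)"
  have N: "N > 0" by (simp add: N_def)
  have dpos: "0 < C$i$i" for i using pd[of "axis i 1"] by (simp add: axis_quad axis_eq_0_iff)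
  have "det C \<le> (trace C / N) ^ CARD('n)"
    using det_pos_had[OF sym pd] amgm[of "\<lambda>i. C$i$i"] dpos
    by (auto simp: trace_def N_def)
  moreover have tpos: "trace C > 0" using dpos by (auto simp: trace_def intro!: sum_pos)
  ultimately have "det C powr (1/N) \<le> ((trace C / N) ^ CARD('n)) powr (1/N)"
    using det_pos_had[OF sym pd] N by (intro powr_mono2) auto
  also have "(trace C / N) ^ CARD('n) = (trace C / N) powr N"
    using tpos N by (simp add: N_def powr_realpow)
  also have "((trace C / N) powr N) powr (1/N) = (trace C / N) powr (N * (1/N))"
    by (simp add: powr_powr)
  also have "\<dots> = trace C / N" using N tpos by simp
  finally have "det C powr (1/N) \<le> trace C / N" .
  then show ?thesis using N by (metis N_def mult.commute pos_le_divide_eq)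
qed

lemma cof_row: "(\<Sum>j\<in>UNIV. cofactor A i j * w$j) = det (\<chi> k. if k = i then w else A$k)"
proof -
  have "det (\<chi> k. if k = i then w else A$k) =
        det (\<chi> k. if k = i then (\<Sum>j\<in>UNIV. (\<lambda>_ j. w$j *s axis j 1) k j) else A$k)"
    by (simp only: basis_expansion)
  also have "\<dots> = (\<Sum>j\<in>UNIV. det (\<chi> k. if k = i then w$j *s axis j 1 else A$k))"
    by (rule det_linear_row_sum) simp
  also have "\<dots> = (\<Sum>j\<in>UNIV. w$j * cofactor A i j)"
    by (simp add: det_row_mul cofactor_def)
  finally show ?thesis by (simp add: mult.commute)
qed

lemma cof_self: "(\<Sum>j\<in>UNIV. cofactor A i j * A$k$j) = (if k = i then det A else (0::real))"
proof -
  have e: "(\<Sum>j\<in>UNIV. cofactor A i j * A$k$j) = det (\<chi> l. if l = i then A$k else A$l)"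
    using cof_row[of A i "A$k"] by simp
  show ?thesis
  proof (cases "k = i")
    case True
    have "(\<chi> l. if l = i then A$k else A$l) = A" using True by (simp add: vec_eq_iff)
    then show ?thesis using e True by simp
  next
    case False
    have "det (\<chi> l. if l = i then A$k else A$l) = 0"
      by (rule det_identical_rows[OF False]) (simp add: row_def vec_eq_iff False)
    then show ?thesis using e False by simp
  qed
qed

lemma sym_entry: "transpose A = A \<Longrightarrow> A$i$j = A$j$i"
  by (metis transpose_def vec_lambda_beta)

lemma quad_congr: "x \<bullet> ((R ** B ** transpose R) *v x) = (transpose R *v x) \<bullet> (B *v (transpose R *v x))"
  for R B :: "real^'n^'n"
  by (simp add: matrix_vector_mul_assoc[symmetric] dot_lmul_matrix[symmetric])

lemma mat_mul_entry: "(mat d ** (X::real^'n^'n))$i$j = d * X$i$j"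
proof -
  have "(mat d ** X)$i$j = (\<Sum>k\<in>UNIV. (if i = k then d else 0) * X$k$j)"
    by (simp add: matrix_matrix_mult_def mat_def)
  also have "\<dots> = (\<Sum>k\<in>UNIV. if i = k then d * X$k$j else 0)" by (rule sum.cong) auto
  also have "\<dots> = d * X$i$j" by simp
  finally show ?thesis .
qed

lemma key:
  fixes A B :: "real^'n^'n"
  assumes symA: "transpose A = A" and pdA: "\<And>x. x \<noteq> 0 \<Longrightarrow> 0 < x \<bullet> (A *v x)"
    and symB: "transpose B = B" and pdB: "\<And>x. x \<noteq> 0 \<Longrightarrow> 0 < x \<bullet> (B *v x)"
  shows "real CARD('n) * det A powr ((real CARD('n) - 1) / real CARD('n)) * det B powr (1 / real CARD('n))
         \<le> (\<Sum>i\<in>UNIV. \<Sum>j\<in>UNIV. cofactor A i j * B$i$j)"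
proof -
  define N where "N = real CARD('n)"
  have N: "N > 0" by (simp add: N_def)
  define K where "K = (\<chi> i j. cofactor A i j)"
  have KA: "K ** A = mat (det A)"
  proof -
    have "(K ** A) $ i $ k = mat (det A) $ i $ k" for i k
    proof -
      have "(K ** A) $ i $ k = (\<Sum>j\<in>UNIV. cofactor A i j * A$k$j)"
        using sym_entry[OF symA] by (simp add: K_def matrix_matrix_mult_def)
      then show ?thesis by (simp add: cof_self mat_def eq_commute)
    qed
    then show ?thesis by (simp add: vec_eq_iff)
  qed
  have "\<exists>R::real^'n^'n. R ** A ** transpose R = mat 1" by (rule normalize[OF symA]) (rule pdA)
  then obtain R :: "real^'n^'n" where R: "R ** A ** transpose R = mat 1" by blast
  have "transpose R ** (R ** A) = mat 1"
    by (rule matrix_left_right_inverse1) (use R in simp)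
  then have "(transpose R ** R) ** A = mat 1" by (simp add: matrix_mul_assoc)
  then have RR: "A ** (transpose R ** R) = mat 1" by (rule matrix_left_right_inverse1)
  have "K = K ** (A ** (transpose R ** R))" by (simp add: RR)
  also have "\<dots> = (K ** A) ** (transpose R ** R)" by (simp add: matrix_mul_assoc)
  also have "\<dots> = mat (det A) ** (transpose R ** R)" by (simp add: KA)
  finally have Keq0: "K $ i $ j = det A * (transpose R ** R) $ i $ j" for i j
    by (simp add: mat_mul_entry)
  have Keq: "K $ i $ j = det A * (\<Sum>l\<in>UNIV. R$l$i * R$l$j)" for i j
    unfolding Keq0 by (simp add: matrix_matrix_mult_def transpose_def)
  define Cm where "Cm = R ** B ** transpose R"
  have detR: "det A * det R * det R = 1"
    using arg_cong[OF R, of det] by (simp add: det_mul mult.commute mult.left_commute)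
  have Apos: "det A > 0" using det_pos_had[OF symA pdA] by simp
  have Bpos: "det B > 0" using det_pos_had[OF symB pdB] by simp
  have detRnz: "det R \<noteq> 0" using detR by auto
  have symC: "transpose Cm = Cm"
    by (simp add: Cm_def matrix_transpose_mul symB matrix_mul_assoc)
  have pdC: "0 < x \<bullet> (Cm *v x)" if "x \<noteq> 0" for x
  proof -
    have "invertible (transpose R)" using detRnz by (simp add: invertible_det_nz)
    then have "inj ((*v) (transpose R))" by (rule inj_matrix_vector_mult)
    then have "transpose R *v x \<noteq> 0" using that
      by (metis injD matrix_vector_mult_0_right)
    then show ?thesis unfolding Cm_def quad_congr by (rule pdB)
  qed
  have detC: "det Cm = det B / det A"
    using detR Apos by (simp add: Cm_def det_mul field_simps)
  have trC: "trace Cm = (\<Sum>l\<in>UNIV. \<Sum>i\<in>UNIV. \<Sum>j\<in>UNIV. R$l$i * R$l$j * B$i$j)"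
  proof -
    have "trace Cm = (\<Sum>l\<in>UNIV. R$l \<bullet> (B *v R$l))"
      by (simp add: trace_def Cm_def mat_quad)
    also have "\<dots> = (\<Sum>l\<in>UNIV. \<Sum>i\<in>UNIV. \<Sum>j\<in>UNIV. R$l$i * R$l$j * B$i$j)"
      by (simp add: inner_vec_def matrix_vector_mult_def sum_distrib_left mult_ac)
    finally show ?thesis .
  qed
  have lhs: "(\<Sum>i\<in>UNIV. \<Sum>j\<in>UNIV. cofactor A i j * B$i$j) = det A * trace Cm"
  proof -
    have "(\<Sum>i\<in>UNIV. \<Sum>j\<in>UNIV. cofactor A i j * B$i$j)
        = (\<Sum>i\<in>UNIV. \<Sum>j\<in>UNIV. det A * (\<Sum>l\<in>UNIV. R$l$i * R$l$j) * B$i$j)"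
      using Keq by (simp add: K_def)
    also have "\<dots> = det A * (\<Sum>i\<in>UNIV. \<Sum>j\<in>UNIV. \<Sum>l\<in>UNIV. R$l$i * R$l$j * B$i$j)"
      by (simp add: sum_distrib_left sum_distrib_right mult.assoc)
    also have "(\<Sum>i\<in>UNIV. \<Sum>j\<in>UNIV. \<Sum>l\<in>UNIV. R$l$i * R$l$j * B$i$j)
        = (\<Sum>i\<in>UNIV. \<Sum>l\<in>UNIV. \<Sum>j\<in>UNIV. R$l$i * R$l$j * B$i$j)"
      by (rule sum.cong[OF refl], rule sum.swap)
    also have "\<dots> = (\<Sum>l\<in>UNIV. \<Sum>i\<in>UNIV. \<Sum>j\<in>UNIV. R$l$i * R$l$j * B$i$j)"
      by (rule sum.swap)
    finally show ?thesis using trC by simp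
  qed
  have tg: "N * det Cm powr (1/N) \<le> trace Cm"
    using trace_ge[OF symC pdC] by (simp add: N_def)
  have "N * det A powr ((N - 1) / N) * det B powr (1 / N) = det A * (N * det Cm powr (1/N))"
  proof -
    have "(N - 1) / N = 1 - 1/N" using N by (simp add: field_simps)
    then have "det A powr ((N - 1) / N) = det A / det A powr (1/N)"
      using Apos by (simp add: powr_diff)
    then show ?thesis using Apos by (simp add: detC powr_divide)
  qed
  also have "\<dots> \<le> det A * trace Cm" using tg Apos by simp
  finally show ?thesis using lhs by (simp add: N_def)
qed

lemma line_deriv:
  fixes g :: "real^'n \<Rightarrow> real"
  assumes "(g has_derivative (\<lambda>h. D \<bullet> h)) (at (y + t *\<^sub>R a))"
  shows "((\<lambda>s. g (y + s *\<^sub>R a)) has_real_derivative (D \<bullet> a)) (at t)"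
proof -
  have l: "((\<lambda>s. y + s *\<^sub>R a) has_derivative (\<lambda>s. s *\<^sub>R a)) (at t)"
    by (auto intro!: derivative_eq_intros)
  have "((\<lambda>s. g (y + s *\<^sub>R a)) has_derivative (\<lambda>s. D \<bullet> (s *\<^sub>R a))) (at t)"
    using has_derivative_compose[OF l] assms by blast
  moreover have "(\<lambda>s. D \<bullet> (s *\<^sub>R a)) = (*) (D \<bullet> a)" by (simp add: fun_eq_iff mult.commute)
  ultimately show ?thesis by (simp add: has_field_derivative_def)
qed

lemma partial_eq:
  fixes g :: "real^'n \<Rightarrow> real"
  assumes "(g has_derivative (\<lambda>h. D \<bullet> h)) (at x)"
  shows "partial i g x = D $ i"
proof -
  have "((\<lambda>s. g (x + s *\<^sub>R axis i 1)) has_real_derivative (D \<bullet> axis i 1)) (at 0)"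
    by (rule line_deriv) (use assms in simp)
  then show ?thesis unfolding partial_def by (simp add: DERIV_imp_deriv inner_axis)
qed

lemma mv_row: "((H::real^'n^'m) *v h) $ j = H$j \<bullet> h"
  by (simp add: matrix_vector_mult_def inner_vec_def mult.commute)

lemma partial_comp:
  fixes G :: "real^'n \<Rightarrow> real^'n"
  assumes "(G has_derivative (\<lambda>h. H *v h)) (at x)"
  shows "partial i (\<lambda>y. G y $ j) x = H $ j $ i"
proof -
  have "((\<lambda>y. G y $ j) has_derivative (\<lambda>h. (H *v h) $ j)) (at x)"
    using bounded_linear.has_derivative[OF bounded_linear_vec_nth assms] .
  then have "((\<lambda>y. G y $ j) has_derivative (\<lambda>h. H$j \<bullet> h)) (at x)" by (simp add: mv_row)
  then show ?thesis by (rule partial_eq)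
qed

lemma hess_eq:
  fixes g :: "real^'n \<Rightarrow> real"
  assumes D: "\<And>y. (g has_derivative (\<lambda>h. Dg y \<bullet> h)) (at y)"
    and H: "(Dg has_derivative (\<lambda>h. H *v h)) (at x)"
  shows "hess g x = transpose H"
proof -
  have pj: "partial j g = (\<lambda>y. Dg y $ j)" for j
    using partial_eq[OF D] by (simp add: fun_eq_iff)
  show ?thesis
    by (simp add: hess_def pj partial_comp[OF H] vec_eq_iff transpose_def)
qed

lemma schwarz_est:
  fixes g :: "real^'n \<Rightarrow> real"
  assumes D: "\<And>y. (g has_derivative (\<lambda>h. Dg y \<bullet> h)) (at y)"
    and H: "(Dg has_derivative (\<lambda>h. H *v h)) (at x)"
    and na: "norm a = 1" and nb: "norm b = 1" and eps: "\<epsilon> > 0"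
  shows "\<exists>\<delta>>0. \<forall>t. 0 < t \<and> t < \<delta> \<longrightarrow>
     \<bar>g (x + t *\<^sub>R a + t *\<^sub>R b) - g (x + t *\<^sub>R a) - g (x + t *\<^sub>R b) + g x - t^2 * ((H *v b) \<bullet> a)\<bar> \<le> \<epsilon> * t^2"
proof -
  have "\<forall>e>0. \<exists>d>0. \<forall>y. norm (y - x) < d \<longrightarrow> norm (Dg y - Dg x - H *v (y - x)) \<le> e * norm (y - x)"
    using H unfolding has_derivative_at_alt by (rule conjunct2)
  note hd = this
  have ep3: "\<epsilon>/3 > 0" using eps by simp
  have "\<exists>d>0. \<forall>y. norm (y - x) < d \<longrightarrow> norm (Dg y - Dg x - H *v (y - x)) \<le> (\<epsilon>/3) * norm (y - x)"
    using hd[rule_format, OF ep3] .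
  then obtain d where d: "d > 0"
    and dd: "\<And>y. norm (y - x) < d \<Longrightarrow> norm (Dg y - Dg x - H *v (y - x)) \<le> (\<epsilon>/3) * norm (y - x)"
    by blast
  show ?thesis
  proof (intro exI[of _ "d/2"] conjI allI impI)
    show "d/2 > 0" using d by simp
    fix t assume t: "0 < t \<and> t < d/2"
    define \<phi> where "\<phi> s = g (x + t *\<^sub>R b + s *\<^sub>R a) - g (x + s *\<^sub>R a)" for s
    define \<phi>' where "\<phi>' s = Dg (x + t *\<^sub>R b + s *\<^sub>R a) \<bullet> a - Dg (x + s *\<^sub>R a) \<bullet> a" for s
    have der: "(\<phi> has_real_derivative \<phi>' s) (at s)" for s
      unfolding \<phi>_def \<phi>'_def
      by (intro DERIV_diff line_deriv D)
    have "\<exists>z. 0 < z \<and> z < t \<and> \<phi> t - \<phi> 0 = (t - 0) * \<phi>' z"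
      by (rule MVT2) (use t der in auto)
    then obtain z where z: "0 < z" "z < t" and mv: "\<phi> t - \<phi> 0 = (t - 0) * \<phi>' z"
      by blast
    define y1 where "y1 = x + t *\<^sub>R b + z *\<^sub>R a"
    define y2 where "y2 = x + z *\<^sub>R a"
    have n1: "norm (y1 - x) \<le> t + z"
    proof -
      have "y1 - x = t *\<^sub>R b + z *\<^sub>R a" by (simp add: y1_def)
      then have "norm (y1 - x) \<le> norm (t *\<^sub>R b) + norm (z *\<^sub>R a)" by (simp only: norm_triangle_ineq)
      also have "\<dots> = t + z" using na nb t z by simp
      finally show ?thesis .
    qed
    have n2: "norm (y2 - x) = z" using na z unfolding y2_def by simp
    define r1 where "r1 = Dg y1 - Dg x - H *v (y1 - x)"
    define r2 where "r2 = Dg y2 - Dg x - H *v (y2 - x)"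
    have r1: "norm r1 \<le> (\<epsilon>/3) * (2*t)"
    proof -
      have "norm r1 \<le> (\<epsilon>/3) * norm (y1 - x)" unfolding r1_def using n1 t z by (intro dd) auto
      also have "\<dots> \<le> (\<epsilon>/3) * (2*t)" using n1 z eps by (intro mult_left_mono) auto
      finally show ?thesis .
    qed
    have r2: "norm r2 \<le> (\<epsilon>/3) * t"
    proof -
      have "norm r2 \<le> (\<epsilon>/3) * norm (y2 - x)" unfolding r2_def using n2 t z by (intro dd) auto
      also have "\<dots> \<le> (\<epsilon>/3) * t" using n2 z eps by (intro mult_left_mono) auto
      finally show ?thesis .
    qed
    have y12: "y1 - y2 = t *\<^sub>R b" by (simp add: y1_def y2_def)
    have "\<phi>' z = (Dg y1 - Dg y2) \<bullet> a" by (simp add: \<phi>'_def y1_def y2_def inner_diff_left)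
    also have "Dg y1 - Dg y2 = r1 - r2 + H *v (y1 - y2)"
      by (simp add: r1_def r2_def matrix_vector_mult_diff_distrib algebra_simps)
    finally have "\<phi>' z = (r1 - r2) \<bullet> a + t * ((H *v b) \<bullet> a)"
      by (simp add: y12 inner_add_left matrix_vector_mult_scaleR)
    then have "\<bar>\<phi>' z - t * ((H *v b) \<bullet> a)\<bar> = \<bar>(r1 - r2) \<bullet> a\<bar>" by simp
    also have "\<dots> \<le> norm (r1 - r2) * norm a" by (rule Cauchy_Schwarz_ineq2)
    also have "\<dots> \<le> norm r1 + norm r2" using na norm_triangle_ineq4[of r1 r2] by simp
    also have "\<dots> \<le> \<epsilon> * t" using r1 r2 by simp
    finally have e1: "\<bar>\<phi>' z - t * ((H *v b) \<bullet> a)\<bar> \<le> \<epsilon> * t" .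
    have "g (x + t *\<^sub>R a + t *\<^sub>R b) - g (x + t *\<^sub>R a) - g (x + t *\<^sub>R b) + g x = \<phi> t - \<phi> 0"
      by (simp add: \<phi>_def algebra_simps)
    also have "\<dots> = t * \<phi>' z" using mv by simp
    finally have "g (x + t *\<^sub>R a + t *\<^sub>R b) - g (x + t *\<^sub>R a) - g (x + t *\<^sub>R b) + g x - t^2 * ((H *v b) \<bullet> a)
        = t * (\<phi>' z - t * ((H *v b) \<bullet> a))"
      by (simp add: power2_eq_square right_diff_distrib)
    then have "\<bar>g (x + t *\<^sub>R a + t *\<^sub>R b) - g (x + t *\<^sub>R a) - g (x + t *\<^sub>R b) + g x - t^2 * ((H *v b) \<bullet> a)\<bar>
        = t * \<bar>\<phi>' z - t * ((H *v b) \<bullet> a)\<bar>"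
      using t by (simp add: abs_mult)
    also have "\<dots> \<le> t * (\<epsilon> * t)" using e1 t by (intro mult_left_mono) auto
    finally show "\<bar>g (x + t *\<^sub>R a + t *\<^sub>R b) - g (x + t *\<^sub>R a) - g (x + t *\<^sub>R b) + g x - t^2 * ((H *v b) \<bullet> a)\<bar> \<le> \<epsilon> * t^2"
      by (simp add: power2_eq_square mult_ac)
  qed
qed

lemma schwarz:
  fixes g :: "real^'n \<Rightarrow> real"
  assumes D: "\<And>y. (g has_derivative (\<lambda>h. Dg y \<bullet> h)) (at y)"
    and H: "(Dg has_derivative (\<lambda>h. H *v h)) (at x)"
  shows "transpose H = H"
proof -
  have "H $ i $ j = H $ j $ i" for i j
  proof (rule ccontr)
    assume ne: "H $ i $ j \<noteq> H $ j $ i"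
    define \<kappa> where "\<kappa> = \<bar>H $ i $ j - H $ j $ i\<bar>"
    have k: "\<kappa> > 0" using ne by (simp add: \<kappa>_def)
    have hij: "(H *v axis j 1) \<bullet> axis i 1 = H $ i $ j"
      by (simp add: inner_axis matrix_vector_mult_basis column_def)
    have hji: "(H *v axis i 1) \<bullet> axis j 1 = H $ j $ i"
      by (simp add: inner_axis matrix_vector_mult_basis column_def)
    obtain d1 where d1: "d1 > 0" and e1: "\<And>t. 0 < t \<and> t < d1 \<Longrightarrow>
      \<bar>g (x + t *\<^sub>R axis i 1 + t *\<^sub>R axis j 1) - g (x + t *\<^sub>R axis i 1) - g (x + t *\<^sub>R axis j 1) + g x
        - t^2 * H $ i $ j\<bar> \<le> (\<kappa>/4) * t^2"
      using schwarz_est[OF D H, of "axis i 1" "axis j 1" "\<kappa>/4"] k hij by auto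
    obtain d2 where d2: "d2 > 0" and e2: "\<And>t. 0 < t \<and> t < d2 \<Longrightarrow>
      \<bar>g (x + t *\<^sub>R axis j 1 + t *\<^sub>R axis i 1) - g (x + t *\<^sub>R axis j 1) - g (x + t *\<^sub>R axis i 1) + g x
        - t^2 * H $ j $ i\<bar> \<le> (\<kappa>/4) * t^2"
      using schwarz_est[OF D H, of "axis j 1" "axis i 1" "\<kappa>/4"] k hji by auto
    define t where "t = min d1 d2 / 2"
    have t: "0 < t" "t < d1" "t < d2" using d1 d2 by (auto simp: t_def)
    have sw: "x + t *\<^sub>R axis j 1 + t *\<^sub>R axis i 1 = x + t *\<^sub>R axis i 1 + t *\<^sub>R axis j 1"
      by (simp add: algebra_simps)
    have "t^2 * \<kappa> = \<bar>t^2 * H $ i $ j - t^2 * H $ j $ i\<bar>"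
      using t by (simp add: \<kappa>_def abs_mult right_diff_distrib[symmetric])
    also have "\<dots> \<le> (\<kappa>/4) * t^2 + (\<kappa>/4) * t^2"
      using e1[of t] e2[of t] t unfolding sw by linarith
    finally have "t^2 * \<kappa> \<le> t^2 * (\<kappa>/2)" by simp
    moreover have "t^2 * (\<kappa>/2) < t^2 * \<kappa>" using t k by (intro mult_strict_left_mono) auto
    ultimately show False by linarith
  qed
  then show ?thesis by (simp add: vec_eq_iff transpose_def)
qed

lemma scaleR_mv: "((c::real) *\<^sub>R (A::real^'n^'m)) *v x = c *\<^sub>R (A *v x)"
  by (simp add: vec_eq_iff matrix_vector_mult_def sum_distrib_left mult.assoc)

lemma hd_eq: "(f has_derivative F) G \<Longrightarrow> F = F' \<Longrightarrow> (f has_derivative F') G"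
  by simp

lemma lin_comp_D:
  fixes u :: "real^'n \<Rightarrow> real" and M :: "real^'n^'n"
  assumes uD: "\<And>y. (u has_derivative (\<lambda>h. Du y \<bullet> h)) (at y)"
  shows "((\<lambda>y. u (M *v y)) has_derivative (\<lambda>h. (transpose M *v Du (M *v y)) \<bullet> h)) (at y)"
proof -
  have l: "((\<lambda>y. M *v y) has_derivative (\<lambda>h. M *v h)) (at y)"
    by (rule bounded_linear.has_derivative[OF matrix_vector_mul_bounded_linear has_derivative_ident])
  have "((\<lambda>y. u (M *v y)) has_derivative (\<lambda>h. Du (M *v y) \<bullet> (M *v h))) (at y)"
    using has_derivative_compose[OF l uD] .
  then show ?thesis
    by (rule hd_eq) (simp add: fun_eq_iff dot_lmul_matrix[symmetric])
qed

lemma lin_comp_H: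
  fixes M :: "real^'n^'n"
  assumes uH: "\<And>y. (Du has_derivative (\<lambda>h. Hu y *v h)) (at y)"
  shows "((\<lambda>y. transpose M *v Du (M *v y)) has_derivative (\<lambda>h. (transpose M ** Hu (M *v y) ** M) *v h)) (at y)"
proof -
  have l: "((\<lambda>y. M *v y) has_derivative (\<lambda>h. M *v h)) (at y)"
    by (rule bounded_linear.has_derivative[OF matrix_vector_mul_bounded_linear has_derivative_ident])
  have "((\<lambda>y. Du (M *v y)) has_derivative (\<lambda>h. Hu (M *v y) *v (M *v h))) (at y)"
    using has_derivative_compose[OF l uH] .
  then have "((\<lambda>y. transpose M *v Du (M *v y)) has_derivative (\<lambda>h. transpose M *v (Hu (M *v y) *v (M *v h)))) (at y)"
    by (rule bounded_linear.has_derivative[OF matrix_vector_mul_bounded_linear])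
  then show ?thesis
    by (rule hd_eq) (simp add: fun_eq_iff matrix_vector_mul_assoc matrix_mul_assoc)
qed

lemma shift_D:
  assumes "(f has_derivative F) (at (y + e))"
  shows "((\<lambda>y. f (y + e)) has_derivative F) (at y)"
proof -
  have l: "((\<lambda>y. y + e) has_derivative (\<lambda>h. h)) (at y)"
    by (auto intro!: derivative_eq_intros)
  show ?thesis using has_derivative_compose[OF l assms] by simp
qed

lemma shift_D':
  assumes "(f has_derivative F) (at (y - e))"
  shows "((\<lambda>y. f (y - e)) has_derivative F) (at y)"
  using shift_D[of f F y "-e"] assms by simp

lemma incr_D:
  fixes v :: "real^'n \<Rightarrow> real"
  assumes vD: "\<And>y. (v has_derivative (\<lambda>h. Dv y \<bullet> h)) (at y)"
  shows "(incr s e v has_derivative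
     (\<lambda>h. ((1 / norm e powr (2 * s)) *\<^sub>R (Dv (y + e) + Dv (y - e) - 2 *\<^sub>R Dv y)) \<bullet> h)) (at y)"
proof -
  have f: "incr s e v = (\<lambda>y. (1 / norm e powr (2 * s)) * (v (y + e) + v (y - e) - 2 * v y))"
    by (simp add: fun_eq_iff incr_def)
  have "((\<lambda>y. (1 / norm e powr (2 * s)) * (v (y + e) + v (y - e) - 2 * v y)) has_derivative
      (\<lambda>h. (1 / norm e powr (2 * s)) * (Dv (y + e) \<bullet> h + Dv (y - e) \<bullet> h - 2 * (Dv y \<bullet> h)))) (at y)"
    by (intro has_derivative_mult_right has_derivative_add has_derivative_diff shift_D shift_D' vD)
  then show ?thesis unfolding f
    by (rule hd_eq) (simp add: fun_eq_iff inner_diff_left inner_add_left)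
qed

lemma incr_H:
  fixes Dv :: "real^'n \<Rightarrow> real^'n"
  assumes vH: "\<And>y. (Dv has_derivative (\<lambda>h. Hv y *v h)) (at y)"
  shows "((\<lambda>y. (1 / norm e powr (2 * s)) *\<^sub>R (Dv (y + e) + Dv (y - e) - 2 *\<^sub>R Dv y)) has_derivative
     (\<lambda>h. ((1 / norm e powr (2 * s)) *\<^sub>R (Hv (y + e) + Hv (y - e) - 2 *\<^sub>R Hv y)) *v h)) (at y)"
proof -
  have "((\<lambda>y. (1 / norm e powr (2 * s)) *\<^sub>R (Dv (y + e) + Dv (y - e) - 2 *\<^sub>R Dv y)) has_derivative
     (\<lambda>h. (1 / norm e powr (2 * s)) *\<^sub>R (Hv (y + e) *v h + Hv (y - e) *v h - 2 *\<^sub>R (Hv y *v h)))) (at y)"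
    by (intro has_derivative_scaleR_right has_derivative_add has_derivative_diff shift_D shift_D' vH)
  then show ?thesis
    by (rule hd_eq) (simp add: fun_eq_iff scaleR_mv matrix_vector_mult_add_rdistrib matrix_vector_mult_diff_rdistrib)
qed

theorem lemma3p1:
  fixes \<alpha> d0 c0 \<theta> c1 c2 s :: real
    and fp f u :: "real^'n::finite \<Rightarrow> real"
    and M :: "real^'n^'n"
    and e :: "real^'n"
  assumes alpha: "0 < \<alpha>" "\<alpha> < 1"
    and fp_bounds: "\<And>x. 1 / d0 \<le> fp x" "\<And>x. fp x \<le> d0"
    and fp_holder: "\<And>x y. \<bar>fp x - fp y\<bar> \<le> d0 * dist x y powr \<alpha>"
    and fp_periodic: "\<And>x i. fp (x + axis i 1) = fp x"
    and f_holder: "\<exists>C. \<forall>x y. \<bar>f x - f y\<bar> \<le> C * dist x y powr \<alpha>"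
    and f_decay: "((\<lambda>x. f x - fp x) \<longlongrightarrow> 0) at_infinity"
    and u_convex: "convex_on UNIV u"
    and u_C2: "C2 u"
    and u_eq: "\<And>x. det (hess u x) = f x"
    and detM: "det M = 1"
    and u_asym: "\<And>x. norm x \<ge> 1 \<Longrightarrow>
                   \<bar>u (M *v x) - (1/2) * norm x ^ 2\<bar> \<le> c0 * norm x powr (2 - \<theta>)"
    and c12: "0 < c1" "0 < c2"
    and hess_bounds: "\<And>x \<xi>. c1 * norm \<xi> ^ 2 \<le> \<xi> \<bullet> (hess (\<lambda>y. u (M *v y)) x *v \<xi>)"
                     "\<And>x \<xi>. \<xi> \<bullet> (hess (\<lambda>y. u (M *v y)) x *v \<xi>) \<le> c2 * norm \<xi> ^ 2"
    and s: "0 < s" "s < \<alpha> / 2"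
    and e: "e \<in> {\<Sum>i\<in>UNIV. of_int (k i) *\<^sub>R (matrix_inv M *v axis i 1) | k. True}" "e \<noteq> 0"
  shows "\<forall>x. (let v = (\<lambda>y. u (M *v y)); fT = (\<lambda>y. f (M *v y)); m = real CARD('n) in
          (\<Sum>i\<in>UNIV. \<Sum>j\<in>UNIV. cofactor (hess v x) i j * partial i (partial j (incr s e v)) x)
          \<ge> m * (det (hess v x) powr ((m - 1) / m)) *
             ((fT (x + e) powr (1/m) + fT (x - e) powr (1/m) - 2 * fT x powr (1/m))
               / norm e powr (2 * s)))"
  proof (intro allI)
  fix x
  obtain Du Hu where uD: "\<And>y. (u has_derivative (\<lambda>h. Du y \<bullet> h)) (at y)"
    and uH: "\<And>y. (Du has_derivative (\<lambda>h. Hu y *v h)) (at y)"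
    using u_C2 unfolding C2_def by blast
  define v where "v = (\<lambda>y. u (M *v y))"
  define Dv where "Dv y = transpose M *v Du (M *v y)" for y
  define Hv where "Hv y = transpose M ** Hu (M *v y) ** M" for y
  define N where "N = real CARD('n)"
  define c where "c = norm e powr (2 * s)"
  have N: "N > 0" by (simp add: N_def)
  have cpos: "c > 0" using e(2) by (simp add: c_def)
  have vD: "\<And>y. (v has_derivative (\<lambda>h. Dv y \<bullet> h)) (at y)"
    unfolding v_def Dv_def by (rule lin_comp_D[OF uD])
  have vH: "\<And>y. (Dv has_derivative (\<lambda>h. Hv y *v h)) (at y)"
    unfolding Dv_def Hv_def by (rule lin_comp_H[OF uH])
  have hv: "hess v y = transpose (Hv y)" for y by (rule hess_eq[OF vD vH])
  have symH: "transpose (Hv y) = Hv y" for y by (rule schwarz[OF vD vH])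
  have hu: "hess u y = transpose (Hu y)" for y by (rule hess_eq[OF uD uH])
  have detv: "det (hess v y) = f (M *v y)" for y
  proof -
    have "det (hess v y) = det (transpose M) * det (Hu (M *v y)) * det M"
      by (simp add: hv Hv_def det_mul)
    also have "\<dots> = det (Hu (M *v y))" using detM by simp
    also have "\<dots> = f (M *v y)" using u_eq[of "M *v y"] by (simp add: hu)
    finally show ?thesis .
  qed
  have symv: "transpose (hess v y) = hess v y" for y using symH by (simp add: hv)
  have pdv: "\<And>\<xi>. \<xi> \<noteq> 0 \<Longrightarrow> 0 < \<xi> \<bullet> (hess v y *v \<xi>)" for y
  proof -
    fix \<xi> :: "real^'n" assume "\<xi> \<noteq> 0"
    then have "0 < c1 * norm \<xi> ^ 2" using c12 by simp
    also have "\<dots> \<le> \<xi> \<bullet> (hess v y *v \<xi>)" using hess_bounds(1)[of \<xi> y] by (simp add: v_def)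
    finally show "0 < \<xi> \<bullet> (hess v y *v \<xi>)" .
  qed
  define ID where "ID y = (1 / c) *\<^sub>R (Dv (y + e) + Dv (y - e) - 2 *\<^sub>R Dv y)" for y
  define IH where "IH y = (1 / c) *\<^sub>R (Hv (y + e) + Hv (y - e) - 2 *\<^sub>R Hv y)" for y
  have ID: "\<And>y. (incr s e v has_derivative (\<lambda>h. ID y \<bullet> h)) (at y)"
    unfolding ID_def c_def by (rule incr_D[OF vD])
  have IH: "\<And>y. (ID has_derivative (\<lambda>h. IH y *v h)) (at y)"
    unfolding ID_def IH_def c_def by (rule incr_H[OF vH])
  have pp: "partial i (partial j (incr s e v)) x
      = (hess v (x + e) $ i $ j + hess v (x - e) $ i $ j - 2 * hess v x $ i $ j) / c" for i j
  proof -
    have "partial i (partial j (incr s e v)) x = hess (incr s e v) x $ i $ j" by (simp add: hess_def)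
    also have "\<dots> = IH x $ j $ i" by (simp add: hess_eq[OF ID IH] transpose_def)
    also have "\<dots> = (hess v (x + e) $ i $ j + hess v (x - e) $ i $ j - 2 * hess v x $ i $ j) / c"
      by (simp add: IH_def hv transpose_def divide_inverse mult.commute)
    finally show ?thesis .
  qed
  define A where "A = hess v x"
  define B1 where "B1 = hess v (x + e)"
  define B2 where "B2 = hess v (x - e)"
  define S where "S X = (\<Sum>i\<in>UNIV. \<Sum>j\<in>UNIV. cofactor A i j * X $ i $ j)" for X :: "real^'n^'n"
  have lhs: "(\<Sum>i\<in>UNIV. \<Sum>j\<in>UNIV. cofactor (hess v x) i j * partial i (partial j (incr s e v)) x)
      = (S B1 + S B2 - 2 * S A) / c"
  proof -
    have "(\<Sum>i\<in>UNIV. \<Sum>j\<in>UNIV. cofactor (hess v x) i j * partial i (partial j (incr s e v)) x)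
      = (\<Sum>i\<in>UNIV. \<Sum>j\<in>UNIV. (cofactor A i j * B1 $ i $ j + cofactor A i j * B2 $ i $ j
            - 2 * (cofactor A i j * A $ i $ j)) / c)"
      by (simp add: pp A_def B1_def B2_def algebra_simps)
    also have "\<dots> = (S B1 + S B2 - 2 * S A) / c"
      by (simp add: S_def sum_divide_distrib[symmetric] sum.distrib sum_subtractf sum_distrib_left)
    finally show ?thesis .
  qed
  have SA: "S A = N * det A"
    by (simp add: S_def cof_self N_def)
  have k1: "N * det A powr ((N - 1) / N) * det B1 powr (1 / N) \<le> S B1"
    unfolding S_def N_def A_def B1_def by (rule key[OF symv pdv symv pdv])
  have k2: "N * det A powr ((N - 1) / N) * det B2 powr (1 / N) \<le> S B2"
    unfolding S_def N_def A_def B2_def by (rule key[OF symv pdv symv pdv])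
  have Apos: "det A > 0" unfolding A_def using det_pos_had[OF symv pdv] by blast
  have aa: "det A powr ((N - 1) / N) * det A powr (1 / N) = det A"
  proof -
    have "det A powr ((N - 1) / N) * det A powr (1 / N) = det A powr ((N - 1) / N + 1 / N)"
      by (simp add: powr_add)
    also have "(N - 1) / N + 1 / N = 1" using N by (simp add: field_simps)
    finally show ?thesis using Apos by simp
  qed
  have "N * det A powr ((N - 1) / N) *
        ((det B1 powr (1 / N) + det B2 powr (1 / N) - 2 * det A powr (1 / N)) / c)
      = (N * det A powr ((N - 1) / N) * det B1 powr (1 / N)
         + N * det A powr ((N - 1) / N) * det B2 powr (1 / N)
         - 2 * (N * (det A powr ((N - 1) / N) * det A powr (1 / N)))) / c"
    by (simp add: algebra_simps)
  also have "\<dots> \<le> (S B1 + S B2 - 2 * S A) / c"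
    using k1 k2 cpos unfolding aa SA by (intro divide_right_mono) auto
  finally have main: "N * det A powr ((N - 1) / N) *
        ((det B1 powr (1 / N) + det B2 powr (1 / N) - 2 * det A powr (1 / N)) / c)
      \<le> (S B1 + S B2 - 2 * S A) / c" .
  show "let v = (\<lambda>y. u (M *v y)); fT = (\<lambda>y. f (M *v y)); m = real CARD('n) in
          (\<Sum>i\<in>UNIV. \<Sum>j\<in>UNIV. cofactor (hess v x) i j * partial i (partial j (incr s e v)) x)
          \<ge> m * (det (hess v x) powr ((m - 1) / m)) *
             ((fT (x + e) powr (1/m) + fT (x - e) powr (1/m) - 2 * fT x powr (1/m))
               / norm e powr (2 * s))"
    unfolding Let_def v_def[symmetric] N_def[symmetric] c_def[symmetric] lhs
    using main by (simp add: A_def B1_def B2_def detv)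
qed

end
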